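(* Let $p\ge 3$ be prime and $q=p^r>3$. Then for every $n\ge 1$ there exists a local permutation polynomial $f\in\mathbb{F}_q[x_1,\dots,x_n]$ of degree $n(q-2)$.
   Context: $\mathbb{F}_q$ is the finite field with $q$ elements. A polynomial $f\in\mathbb{F}_q[x_1,\dots,x_n]$ is a local permutation polynomial (LPP) if, for each $i$ and each choice of the other coordinates $(a_j)_{j\ne i}\in\mathbb{F}_q^{n-1}$, the univariate polynomial in $x_i$ obtained by fixing $x_j=a_j$ for $j\ne i$ induces a bijection of $\mathbb{F}_q$. Polynomials are reduced (degree $<q$ in each variable), and degree means total degree. *)

theory Defs
  imports Main "HOL-Library.Cardinality" "HOL-Computational_Algebra.Primes"
begin

text \<open>Reduced polynomials in n variables x_0,...,x_{n-1} over a finite field 'a with q elements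
are represented by their coefficient functions c on exponent vectors e :: nat \<Rightarrow> nat,
where the support lies in exps n q (every exponent < q, variables beyond n unused).\<close>

definition exps :: "nat \<Rightarrow> nat \<Rightarrow> (nat \<Rightarrow> nat) set" where
  "exps n q = {e. (\<forall>i<n. e i < q) \<and> (\<forall>i\<ge>n. e i = 0)}"

definition reduced_poly :: "nat \<Rightarrow> nat \<Rightarrow> ((nat \<Rightarrow> nat) \<Rightarrow> 'a::zero) \<Rightarrow> bool" where
  "reduced_poly n q c \<longleftrightarrow> (\<forall>e. c e \<noteq> 0 \<longrightarrow> e \<in> exps n q)"

definition mpeval :: "nat \<Rightarrow> ((nat \<Rightarrow> nat) \<Rightarrow> 'a::{finite,field}) \<Rightarrow> (nat \<Rightarrow> 'a) \<Rightarrow> 'a" where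
  "mpeval n c x = (\<Sum>e\<in>exps n CARD('a). c e * (\<Prod>i<n. x i ^ e i))"

text \<open>Total degree (the zero polynomial gets degree 0 by convention; irrelevant below).\<close>
definition total_degree :: "nat \<Rightarrow> ((nat \<Rightarrow> nat) \<Rightarrow> 'a::zero) \<Rightarrow> nat" where
  "total_degree n c = Max (insert 0 {sum e {..<n} | e. c e \<noteq> 0})"

definition is_lpp :: "nat \<Rightarrow> ((nat \<Rightarrow> nat) \<Rightarrow> 'a::{finite,field}) \<Rightarrow> bool" where
  "is_lpp n c \<longleftrightarrow> (\<forall>i<n. \<forall>a::nat \<Rightarrow> 'a. bij (\<lambda>t. mpeval n c (a(i := t))))"

end

theory Submission
  imports Defs
begin


lemma bijI2: "(\<And>x. g (f x) = x) \<Longrightarrow> (\<And>y. f (g y) = y) \<Longrightarrow> bij f"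
  by (metis bij_betw_byWitness subset_UNIV)

lemma bij_betwI2: "(\<And>x. x \<in> A \<Longrightarrow> g (f x) = x) \<Longrightarrow> (\<And>y. y \<in> B \<Longrightarrow> f (g y) = y)
  \<Longrightarrow> f ` A \<subseteq> B \<Longrightarrow> g ` B \<subseteq> A \<Longrightarrow> bij_betw f A B"
  by (rule bij_betw_byWitness) auto

lemma card_ge1: "CARD('a::finite) \<ge> 1"
  by (simp add: Suc_leI)

lemma sum_shift_one:
  "(\<Sum>y\<in>(UNIV::'a::{finite,field} set). y + 1) = (\<Sum>y\<in>UNIV. y)"
proof -
  have "bij (\<lambda>y::'a. y + 1)" by (rule bijI2[where g="\<lambda>y. y - 1"]) auto
  then show ?thesis using sum.reindex_bij_betw[of "\<lambda>y::'a. y + 1" UNIV UNIV "\<lambda>y. y"] by simp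
qed

lemma of_nat_card_zero: "(of_nat CARD('a::{finite,field}) :: 'a) = 0"
proof -
  have "(\<Sum>y\<in>(UNIV::'a set). y + 1) = (\<Sum>y\<in>UNIV. y) + of_nat CARD('a)"
    by (simp add: sum.distrib)
  then show ?thesis using sum_shift_one[where 'a='a] by simp
qed

lemma pow_card: "(x::'a::{finite,field}) ^ CARD('a) = x"
proof (cases "x = 0")
  case True then show ?thesis using card_ge1[where 'a='a] by (simp add: power_0_left)
next
  case False
  let ?S = "UNIV - {0::'a}"
  have inj: "bij_betw (\<lambda>y. x * y) ?S ?S"
    by (rule bij_betwI2[where g="\<lambda>y. y / x"]) (use False in auto)
  have "(\<Prod>y\<in>?S. x * y) = (\<Prod>y\<in>?S. y)"
    using prod.reindex_bij_betw[OF inj, of "\<lambda>y. y"] by simp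
  moreover have "(\<Prod>y\<in>?S. x * y) = x ^ card ?S * (\<Prod>y\<in>?S. y)"
    by (simp add: prod.distrib)
  moreover have "(\<Prod>y\<in>?S. y) \<noteq> 0" by simp
  ultimately have "x ^ card ?S = 1" by simp
  moreover have "card ?S = CARD('a) - 1" by (simp add: card_Diff_subset)
  ultimately have "x ^ (CARD('a) - 1) = 1" by simp
  then have "x * x ^ (CARD('a) - 1) = x" by simp
  then show ?thesis using card_ge1[where 'a='a]
    by (metis Suc_diff_1 less_le_trans power_Suc zero_less_one)
qed

lemma two_ne_zero:
  assumes "odd CARD('a::{finite,field})" shows "(2::'a) \<noteq> 0"
proof
  assume h: "(2::'a) = 0"
  obtain m where m: "CARD('a) = 2*m+1" using assms oddE by blast
  have "(of_nat CARD('a)::'a) = of_nat m * 2 + 1" by (simp add: m)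
  also have "\<dots> = 1" using h by simp
  finally show False using of_nat_card_zero[where 'a='a] by simp
qed

lemma sum_univ_zero:
  assumes "odd CARD('a::{finite,field})" shows "(\<Sum>y\<in>(UNIV::'a set). y) = 0"
proof -
  have t: "(2::'a) \<noteq> 0" by (rule two_ne_zero[OF assms])
  have "bij (\<lambda>y::'a. 2 * y)" by (rule bijI2[where g="\<lambda>y. y / 2"]) (use t in auto)
  then have "(\<Sum>y\<in>(UNIV::'a set). 2 * y) = (\<Sum>y\<in>UNIV. y)"
    using sum.reindex_bij_betw[of "\<lambda>y::'a. 2*y" UNIV UNIV "\<lambda>y. y"] by simp
  then have "2 * (\<Sum>y\<in>(UNIV::'a set). y) = (\<Sum>y\<in>UNIV. y)" by (simp add: sum_distrib_left)
  then show ?thesis by (metis add_cancel_right_left mult_2)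
qed

lemma sum_bij_zero:
  assumes "odd CARD('a::{finite,field})" and "bij (f::'a \<Rightarrow> 'a)"
  shows "(\<Sum>t\<in>UNIV. f t) = 0"
  using sum.reindex_bij_betw[OF assms(2), of "\<lambda>y. y"] sum_univ_zero[OF assms(1)] by simp


definition pts :: "nat \<Rightarrow> (nat \<Rightarrow> 'a::zero) set" where
  "pts n = {x. \<forall>i\<ge>n. x i = 0}"

lemma pts_Suc_bij: "bij_betw (\<lambda>(x,t). x(n:=t)) (pts n \<times> (UNIV::'a::zero set)) (pts (Suc n))"
  by (rule bij_betwI2[where g="\<lambda>z. (z(n:=0), z n)"]) (auto simp: pts_def fun_eq_iff)

lemma finite_pts: "finite (pts n :: (nat \<Rightarrow> 'a::{zero,finite}) set)"
proof (induction n)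
  case 0
  have "pts 0 = {(\<lambda>_. 0) :: nat \<Rightarrow> 'a}" by (auto simp: pts_def)
  then show ?case by simp
next
  case (Suc n)
  have "pts (Suc n) = (\<lambda>(x,t). x(n:=t)) ` (pts n \<times> (UNIV::'a set))"
    using pts_Suc_bij[of n] by (metis bij_betw_def)
  then show ?case using Suc by simp
qed

lemma sum_pts_Suc:
  "(\<Sum>x\<in>pts (Suc n). g x) = (\<Sum>x\<in>(pts n::(nat\<Rightarrow>'a::{zero,finite}) set). \<Sum>t\<in>UNIV. g (x(n:=t)))"
proof -
  have "(\<Sum>x\<in>pts (Suc n). g x) = (\<Sum>p\<in>pts n \<times> (UNIV::'a set). g ((\<lambda>(x,t). x(n:=t)) p))"
    using sum.reindex_bij_betw[OF pts_Suc_bij[of n], of g] by simp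
  also have "\<dots> = (\<Sum>x\<in>pts n. \<Sum>t\<in>UNIV. g (x(n:=t)))"
    by (simp add: sum.cartesian_product split_def)
  finally show ?thesis .
qed

lemma pts_coord_bij:
  assumes "k < n"
  shows "bij_betw (\<lambda>(x,t). x(k:=t)) ({x\<in>pts n. x k = 0} \<times> (UNIV::'a::zero set)) (pts n)"
  by (rule bij_betwI2[where g="\<lambda>z. (z(k:=0), z k)"]) (use assms in \<open>auto simp: pts_def fun_eq_iff\<close>)

lemma sum_pts_coord:
  assumes "k < n"
  shows "(\<Sum>x\<in>pts n. g x) = (\<Sum>x\<in>{x\<in>(pts n::(nat\<Rightarrow>'a::{zero,finite}) set). x k = 0}. \<Sum>t\<in>UNIV. g (x(k:=t)))"
proof -
  have "(\<Sum>x\<in>pts n. g x) = (\<Sum>p\<in>{x\<in>pts n. x k = 0} \<times> (UNIV::'a set). g ((\<lambda>(x,t). x(k:=t)) p))"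
    using sum.reindex_bij_betw[OF pts_coord_bij[OF assms], of g] by simp
  also have "\<dots> = (\<Sum>x\<in>{x\<in>pts n. x k = 0}. \<Sum>t\<in>UNIV. g (x(k:=t)))"
    by (simp add: sum.cartesian_product split_def)
  finally show ?thesis .
qed

lemma exps_Suc_bij: "bij_betw (\<lambda>(e,j). e(n:=j)) (exps n q \<times> {..<q}) (exps (Suc n) q)"
proof (rule bij_betwI2[where g="\<lambda>z. (z(n:=0), z n)"])
  fix p assume "p \<in> exps n q \<times> {..<q}"
  then show "(\<lambda>z. (z(n:=0), z n)) ((\<lambda>(x,t). x(n:=t)) p) = p"
    by (cases p) (auto simp: exps_def fun_eq_iff)
next
  fix z assume "z \<in> exps (Suc n) q"
  then show "(\<lambda>(x,t). x(n:=t)) ((\<lambda>z. (z(n:=0), z n)) z) = z" by auto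
qed (auto simp: exps_def less_Suc_eq)

lemma finite_exps: "finite (exps n q)"
proof (induction n)
  case 0
  have "exps 0 q = {\<lambda>_. 0}" by (auto simp: exps_def)
  then show ?case by simp
next
  case (Suc n)
  have "exps (Suc n) q = (\<lambda>(x,t). x(n:=t)) ` (exps n q \<times> {..<q})"
    using exps_Suc_bij[of n q] by (metis bij_betw_def)
  then show ?case using Suc by simp
qed

lemma sum_prod_exps:
  fixes g :: "nat \<Rightarrow> nat \<Rightarrow> 'b::comm_semiring_1"
  shows "(\<Sum>e\<in>exps n q. \<Prod>i<n. g i (e i)) = (\<Prod>i<n. \<Sum>j<q. g i j)"
proof (induction n)
  case 0
  have "exps 0 q = {\<lambda>_. 0}" by (auto simp: exps_def)
  then show ?case by simp
next
  case (Suc n)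
  have "(\<Sum>e\<in>exps (Suc n) q. \<Prod>i<Suc n. g i (e i))
      = (\<Sum>p\<in>exps n q \<times> {..<q}. \<Prod>i<Suc n. g i (((\<lambda>(x,t). x(n:=t)) p) i))"
    using sum.reindex_bij_betw[OF exps_Suc_bij[of n q], of "\<lambda>e. \<Prod>i<Suc n. g i (e i)"] by simp
  also have "\<dots> = (\<Sum>e\<in>exps n q. \<Sum>j<q. (\<Prod>i<n. g i (e i)) * g n j)"
    unfolding sum.cartesian_product by (simp add: split_def lessThan_Suc mult.commute)
  also have "\<dots> = (\<Sum>e\<in>exps n q. \<Prod>i<n. g i (e i)) * (\<Sum>j<q. g n j)"
    by (simp add: sum_distrib_left sum_distrib_right) (rule sum.swap)
  finally show ?case using Suc by (simp add: lessThan_Suc mult.commute)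
qed


definition kap :: "nat \<Rightarrow> 'a::{finite,field} \<Rightarrow> 'a" where
  "kap j a = (if j = 0 then 1 - a^(CARD('a)-1) else - (a^(CARD('a)-1-j)))"

lemma kap_sum: "(\<Sum>j<CARD('a). kap j a * x^j) = (if x = a then 1 else (0::'a::{finite,field}))"
proof -
  let ?q = "CARD('a)"
  let ?S = "\<Sum>j<?q. a^(?q - Suc j) * x^j"
  have "\<And>j. kap j a * x^j = (if j = 0 then 1 else 0) - a^(?q - Suc j) * x^j"
    by (simp add: kap_def algebra_simps)
  then have "(\<Sum>j<?q. kap j a * x^j) = (\<Sum>j<?q. (if j = 0 then 1 else 0)) - ?S"
    by (simp add: sum_subtractf)
  also have "(\<Sum>j<?q. (if j = 0 then 1 else 0::'a)) = 1"
    using card_ge1[where 'a='a] by (simp add: sum.delta)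
  finally have e: "(\<Sum>j<?q. kap j a * x^j) = 1 - ?S" .
  have d: "x^?q - a^?q = (x - a) * ?S" by (rule power_diff_sumr2)
  show ?thesis
  proof (cases "x = a")
    case True
    have "?S = (\<Sum>j<?q. a^(?q - 1))"
      using True by (intro sum.cong) (auto simp flip: power_add)
    also have "\<dots> = of_nat ?q * a^(?q - 1)" by simp
    also have "\<dots> = 0" by (simp add: of_nat_card_zero)
    finally show ?thesis using e True by simp
  next
    case False
    have "(x - a) * ?S = (x - a) * 1" using d by (simp add: pow_card)
    then have "?S = 1" using False by simp
    then show ?thesis using e False by simp
  qed
qed

definition dep :: "nat \<Rightarrow> ((nat \<Rightarrow> 'a) \<Rightarrow> 'b) \<Rightarrow> bool" where
  "dep n F \<longleftrightarrow> (\<forall>x y. (\<forall>i<n. x i = y i) \<longrightarrow> F x = F y)"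

definition coef :: "nat \<Rightarrow> ((nat \<Rightarrow> 'a) \<Rightarrow> 'a) \<Rightarrow> (nat \<Rightarrow> nat) \<Rightarrow> 'a::{finite,field}" where
  "coef n F e = (if e \<in> exps n CARD('a) then \<Sum>a\<in>pts n. F a * (\<Prod>i<n. kap (e i) (a i)) else 0)"

lemma mpeval_coef:
  fixes F :: "(nat \<Rightarrow> 'a) \<Rightarrow> 'a::{finite,field}"
  assumes "dep n F"
  shows "mpeval n (coef n F) x = F x"
proof -
  let ?q = "CARD('a)"
  define xr where "xr = (\<lambda>i. if i < n then x i else (0::'a))"
  have xr: "xr \<in> pts n" by (auto simp: xr_def pts_def)
  have "mpeval n (coef n F) x = (\<Sum>e\<in>exps n ?q. \<Sum>a\<in>pts n. F a * (\<Prod>i<n. kap (e i) (a i)) * (\<Prod>i<n. x i ^ e i))"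
    unfolding mpeval_def coef_def by (simp add: sum_distrib_right)
  also have "\<dots> = (\<Sum>a\<in>pts n. F a * (\<Sum>e\<in>exps n ?q. \<Prod>i<n. kap (e i) (a i) * x i ^ e i))"
    by (subst sum.swap) (simp add: sum_distrib_left prod.distrib mult.assoc)
  also have "\<dots> = (\<Sum>a\<in>pts n. F a * (\<Prod>i<n. (if x i = a i then 1 else 0)))"
  proof (rule sum.cong[OF refl])
    fix a
    have "(\<Sum>e\<in>exps n ?q. \<Prod>i<n. kap (e i) (a i) * x i ^ e i) = (\<Prod>i<n. \<Sum>j<?q. kap j (a i) * x i ^ j)"
      by (rule sum_prod_exps[of "\<lambda>i j. kap j (a i) * x i ^ j"])
    also have "\<dots> = (\<Prod>i<n. (if x i = a i then 1 else 0))" by (simp add: kap_sum)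
    finally show "F a * (\<Sum>e\<in>exps n ?q. \<Prod>i<n. kap (e i) (a i) * x i ^ e i) = F a * (\<Prod>i<n. (if x i = a i then 1 else 0))" by simp
  qed
  also have "\<dots> = (\<Sum>a\<in>pts n. if a = xr then F a else 0)"
  proof (rule sum.cong)
    fix a :: "nat \<Rightarrow> 'a" assume a: "a \<in> pts n"
    show "F a * (\<Prod>i<n. (if x i = a i then 1 else 0)) = (if a = xr then F a else 0)"
    proof (cases "a = xr")
      case True then show ?thesis by (simp add: xr_def)
    next
      case False
      then obtain i where "a i \<noteq> xr i" by auto
      moreover have "i < n" using a xr calculation by (auto simp: pts_def xr_def split: if_splits)
      ultimately have "(\<Prod>i<n. (if x i = a i then 1 else (0::'a))) = 0"
        by (intro prod_zero) (auto simp: xr_def intro!: bexI[of _ i])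
      then show ?thesis using False by simp
    qed
  qed simp
  also have "\<dots> = F xr" by (subst sum.delta[OF finite_pts]) (simp add: xr)
  also have "\<dots> = F x" using assms by (auto simp: dep_def xr_def)
  finally show ?thesis .
qed


definition latin :: "nat \<Rightarrow> ((nat \<Rightarrow> 'a) \<Rightarrow> 'a) \<Rightarrow> bool" where
  "latin n F \<longleftrightarrow> (\<forall>i<n. \<forall>a. bij (\<lambda>t. F (a(i:=t))))"

lemma kap_last: "CARD('a::{finite,field}) > 1 \<Longrightarrow> kap (CARD('a) - 1) (b::'a) = -1"
  by (simp add: kap_def)

lemma kap_top: "CARD('a::{finite,field}) > 3 \<Longrightarrow> kap (CARD('a) - 2) (b::'a) = - b"
proof -
  assume "CARD('a) > 3"
  then have "CARD('a) - 1 - (CARD('a) - 2) = 1" "CARD('a) - 2 \<noteq> 0" by auto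
  then show ?thesis by (simp add: kap_def)
qed

lemma coef_zero_last:
  fixes F :: "(nat \<Rightarrow> 'a) \<Rightarrow> 'a::{finite,field}"
  assumes lat: "latin n F" and odd: "odd CARD('a)" and q: "CARD('a) > 3"
    and k: "k < n" and ek: "e k = CARD('a) - 1"
  shows "coef n F e = 0"
proof (cases "e \<in> exps n CARD('a)")
  case False then show ?thesis by (simp add: coef_def)
next
  case True
  let ?P = "\<lambda>a::nat \<Rightarrow> 'a. \<Prod>i<n. kap (e i) (a i)"
  have P: "?P (a(k:=t)) = ?P a" for a t
  proof (rule prod.cong[OF refl])
    fix i assume "i \<in> {..<n}"
    show "kap (e i) ((a(k:=t)) i) = kap (e i) (a i)"
      using q ek by (cases "i = k") (simp_all add: kap_def)
  qed
  have "coef n F e = (\<Sum>a\<in>pts n. F a * ?P a)" using True by (simp add: coef_def)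
  also have "\<dots> = (\<Sum>a\<in>{x\<in>pts n. x k = 0}. \<Sum>t\<in>UNIV. F (a(k:=t)) * ?P (a(k:=t)))"
    by (rule sum_pts_coord[OF k])
  also have "\<dots> = (\<Sum>a\<in>{x\<in>pts n. x k = 0}. (\<Sum>t\<in>UNIV. F (a(k:=t))) * ?P a)"
    by (simp only: P sum_distrib_right)
  also have "\<dots> = 0"
    using lat k sum_bij_zero[OF odd] by (simp add: latin_def)
  finally show ?thesis .
qed

lemma coef_top:
  fixes F :: "(nat \<Rightarrow> 'a) \<Rightarrow> 'a::{finite,field}"
  assumes q: "CARD('a) > 3"
  shows "coef n F (\<lambda>i. if i < n then CARD('a) - 2 else 0)
       = (-1)^n * (\<Sum>a\<in>pts n. F a * (\<Prod>i<n. a i))"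
proof -
  have ex: "(\<lambda>i. if i < n then CARD('a) - 2 else 0) \<in> exps n CARD('a)"
    using q by (auto simp: exps_def)
  have "coef n F (\<lambda>i. if i < n then CARD('a) - 2 else 0)
      = (\<Sum>a\<in>pts n. F a * (\<Prod>i<n. - a i))"
    using ex q by (simp add: coef_def kap_top)
  also have "\<dots> = (-1)^n * (\<Sum>a\<in>pts n. F a * (\<Prod>i<n. a i))"
    by (simp add: prod_uminus sum_distrib_left mult.left_commute)
  finally show ?thesis .
qed

lemma total_degree_coef:
  fixes F :: "(nat \<Rightarrow> 'a) \<Rightarrow> 'a::{finite,field}"
  assumes lat: "latin n F" and odd: "odd CARD('a)" and q: "CARD('a) > 3"
    and T: "(\<Sum>a\<in>pts n. F a * (\<Prod>i<n. a i)) \<noteq> 0"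
  shows "total_degree n (coef n F) = n * (CARD('a) - 2)"
proof -
  let ?q = "CARD('a)"
  define S where "S = {sum e {..<n} |e. coef n F e \<noteq> 0}"
  have bound: "v \<le> n * (?q - 2)" if "v \<in> S" for v
  proof -
    obtain e where v: "v = sum e {..<n}" and ne: "coef n F e \<noteq> 0" using \<open>v \<in> S\<close> unfolding S_def by blast
    have ex: "e \<in> exps n ?q" using ne unfolding coef_def by meson
    have le: "e i \<le> ?q - 2" if "i \<in> {..<n}" for i
    proof -
      have "e i < ?q" using ex that unfolding exps_def by blast
      moreover have "e i \<noteq> ?q - 1" using coef_zero_last[OF lat odd q, of i e] that ne by blast
      ultimately show ?thesis by linarith
    qed
    have "sum e {..<n} \<le> of_nat (card {..<n}) * (?q - 2)"
      by (rule sum_bounded_above) (rule le)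
    then show ?thesis using v by simp
  qed
  have top: "n * (?q - 2) \<in> S"
  proof -
    let ?e = "\<lambda>i. if i < n then ?q - 2 else 0"
    have c: "coef n F ?e \<noteq> 0" using coef_top[OF q, of n F] T by simp
    have s: "n * (?q - 2) = sum ?e {..<n}" by simp
    show ?thesis unfolding S_def mem_Collect_eq by (rule exI[of _ ?e]) (use c s in blast)
  qed
  have sub: "insert 0 S \<subseteq> {..n * (?q - 2)}" using bound by blast
  have fin: "finite (insert 0 S)" by (rule finite_subset[OF sub]) simp
  have "Max (insert 0 S) = n * (?q - 2)"
    by (rule Max_eqI[OF fin]) (use bound top in blast)+
  then show ?thesis unfolding total_degree_def S_def .
qed



definition wt :: "nat \<Rightarrow> ((nat \<Rightarrow> 'a) \<Rightarrow> 'a) \<Rightarrow> 'a \<Rightarrow> 'a::{finite,field}" where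
  "wt n F z = (\<Sum>x\<in>pts n. if F x = z then (\<Prod>i<n. x i) else 0)"

definition NA :: "('a \<Rightarrow> 'a::ab_group_add) \<Rightarrow> bool" where
  "NA w \<longleftrightarrow> (\<exists>x y. w (x+y) - w y \<noteq> w x - w 0)"

definition sw :: "'a \<Rightarrow> 'a \<Rightarrow> 'a \<Rightarrow> 'a" where
  "sw a b x = (if x = a then b else if x = b then a else x)"

definition Dc :: "nat \<Rightarrow> ((nat \<Rightarrow> 'a) \<Rightarrow> 'a) \<Rightarrow> ('a \<Rightarrow> 'a) \<Rightarrow> 'a \<Rightarrow> 'a::{finite,field}" where
  "Dc n F \<beta> s = (\<Sum>y\<in>pts n. (\<Prod>i<n. y i) * \<beta> (s - F y))"

lemma sw_invol: "sw a b (sw a b x) = x"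
  by (auto simp: sw_def)

lemma bij_sw: "bij (sw a b)"
  by (rule bijI2[where g="sw a b"]) (simp_all add: sw_invol)

lemma Dc_conv: "Dc n F \<beta> s = (\<Sum>u\<in>UNIV. wt n F u * \<beta> (s - u))"
proof -
  have "(\<Sum>u\<in>UNIV. wt n F u * \<beta> (s - u))
      = (\<Sum>u\<in>UNIV. \<Sum>y\<in>pts n. if F y = u then (\<Prod>i<n. y i) * \<beta> (s - u) else 0)"
    unfolding wt_def sum_distrib_right by (intro sum.cong refl) simp
  also have "\<dots> = (\<Sum>y\<in>pts n. \<Sum>u\<in>UNIV. if F y = u then (\<Prod>i<n. y i) * \<beta> (s - u) else 0)"
    by (rule sum.swap)
  also have "\<dots> = Dc n F \<beta> s" by (simp add: Dc_def)
  finally show ?thesis ..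
qed

lemma choose_beta:
  fixes w :: "'a \<Rightarrow> 'a::{finite,field}"
  assumes "NA w"
  shows "\<exists>\<beta>. (\<forall>x. \<beta> (\<beta> x) = x) \<and>
           (\<exists>s1 s2. (\<Sum>u\<in>UNIV. w u * \<beta> (s1 - u)) \<noteq> (\<Sum>u\<in>UNIV. w u * \<beta> (s2 - u)))"
proof -
  obtain x y where xy: "w (x+y) - w y \<noteq> w x - w 0" using assms by (auto simp: NA_def)
  then have d0: "x \<noteq> 0" by auto
  define G0 where "G0 s = (\<Sum>u\<in>UNIV. w u * id (s - u))" for s
  define G1 where "G1 s = (\<Sum>u\<in>UNIV. w u * sw 0 x (s - u))" for s
  have diff: "G1 s - G0 s = x * (w s - w (s - x))" for s
  proof -
    have "\<And>u. w u * sw 0 x (s - u) - w u * id (s - u)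
          = (if u = s then w s * x else 0) + (if u = s - x then - (w (s - x) * x) else 0)"
      using d0 by (auto simp: sw_def algebra_simps)
    then have "G1 s - G0 s = (\<Sum>u\<in>UNIV. (if u = s then w s * x else 0) + (if u = s - x then - (w (s - x) * x) else 0))"
      unfolding G0_def G1_def by (simp add: sum_subtractf[symmetric])
    also have "\<dots> = w s * x - w (s - x) * x" by (simp add: sum.distrib)
    finally show ?thesis by (simp add: algebra_simps)
  qed
  have "G1 (x+y) - G0 (x+y) \<noteq> G1 x - G0 x"
    using xy d0 by (simp add: diff)
  then have "G0 (x+y) \<noteq> G0 x \<or> G1 (x+y) \<noteq> G1 x" by auto
  then show ?thesis
  proof
    assume "G0 (x+y) \<noteq> G0 x"
    then show ?thesis by (intro exI[of _ id]) (auto simp: G0_def)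
  next
    assume "G1 (x+y) \<noteq> G1 x"
    then show ?thesis by (intro exI[of _ "sw 0 x"]) (auto simp: G1_def sw_invol)
  qed
qed

lemma choose_sigma:
  fixes D :: "'a \<Rightarrow> 'a::{finite,field}"
  assumes "D a \<noteq> D b"
  shows "\<exists>\<sigma>. bij \<sigma> \<and> (\<Sum>s\<in>UNIV. \<sigma> s * D s) \<noteq> 0"
proof (cases "(\<Sum>s\<in>UNIV. s * D s) = 0")
  case False
  then show ?thesis by (intro exI[of _ id] conjI bij_id) simp
next
  case True
  have ab: "a \<noteq> b" using assms by auto
  have "sw a b s * D s - s * D s = (if s = a then (b - a) * D a else 0) + (if s = b then (a - b) * D b else 0)" for s
  proof (cases "s = a")
    case True then show ?thesis using ab by (simp add: sw_def left_diff_distrib)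
  next
    case False then show ?thesis using ab by (cases "s = b") (simp_all add: sw_def left_diff_distrib)
  qed
  then have "(\<Sum>s\<in>UNIV. sw a b s * D s) - (\<Sum>s\<in>UNIV. s * D s)
      = (\<Sum>s\<in>UNIV. (if s = a then (b - a) * D a else 0) + (if s = b then (a - b) * D b else 0))"
    by (simp only: sum_subtractf[symmetric])
  also have "\<dots> = (b - a) * D a + (a - b) * D b" by (simp add: sum.distrib)
  also have "\<dots> = (b - a) * (D a - D b)" by (simp add: algebra_simps)
  finally have "(\<Sum>s\<in>UNIV. sw a b s * D s) \<noteq> 0" using True ab assms by simp
  then show ?thesis by (intro exI[of _ "sw a b"] conjI bij_sw)
qed

lemma choose_pi:
  fixes D :: "'a \<Rightarrow> 'a::{finite,field}"
  assumes q: "CARD('a) > 3" and two: "(2::'a) \<noteq> 0" and ab: "D a \<noteq> D b"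
  shows "\<exists>\<pi>. bij \<pi> \<and> NA (D \<circ> \<pi>)"
proof (cases "NA D")
  case True
  then show ?thesis by (intro exI[of _ id]) auto
next
  case False
  then have add: "D (x+y) - D y = D x - D 0" for x y by (auto simp: NA_def)
  obtain e where e: "D e \<noteq> D 0" using ab by metis
  then have e0: "e \<noteq> 0" by auto
  have "card {-e} \<le> 1" by simp
  then have "card {e, -e} \<le> 2" by (intro card_insert_le_m1) auto
  then have "card {0, e, -e} \<le> 3" by (intro card_insert_le_m1) auto
  then have "{0, e, -e} \<noteq> (UNIV::'a set)" using q by auto
  then obtain c where c: "c \<notin> {0, e, -e}" by blast
  let ?E = "D \<circ> sw 0 e"
  have "?E (e + c) = D (e + c)" using c e0 by (auto simp: sw_def add_eq_0_iff)
  moreover have "?E c = D c" using c by (auto simp: sw_def)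
  moreover have "?E e = D 0" "?E 0 = D e" using e0 by (auto simp: sw_def)
  ultimately have "?E (e + c) - ?E c - (?E e - ?E 0) = 2 * (D e - D 0)"
    using add[of e c] by (simp add: algebra_simps)
  also have "\<dots> \<noteq> 0" using two e by simp
  finally have "?E (e + c) - ?E c \<noteq> ?E e - ?E 0" by (metis right_minus_eq)
  then have "NA ?E" unfolding NA_def by blast
  then show ?thesis by (intro exI[of _ "sw 0 e"] conjI bij_sw)
qed



lemma sum_subst_beta:
  fixes \<beta> :: "'a \<Rightarrow> 'a::{finite,field}"
  assumes inv: "\<And>x. \<beta> (\<beta> x) = x"
  shows "(\<Sum>t\<in>UNIV. g (c + \<beta> t) * t) = (\<Sum>s\<in>UNIV. g s * \<beta> (s - c))"
proof -
  have bij: "bij (\<lambda>s. \<beta> (s - c))" by (rule bijI2[where g="\<lambda>t. \<beta> t + c"]) (simp_all add: inv)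
  have "(\<Sum>s\<in>UNIV. g s * \<beta> (s - c)) = (\<Sum>s\<in>UNIV. (\<lambda>t. g (c + \<beta> t) * t) (\<beta> (s - c)))"
    by (simp add: inv)
  also have "\<dots> = (\<Sum>t\<in>UNIV. g (c + \<beta> t) * t)" by (rule sum.reindex_bij_betw[OF bij])
  finally show ?thesis ..
qed

lemma key_sum:
  fixes F :: "(nat \<Rightarrow> 'a) \<Rightarrow> 'a::{finite,field}"
  assumes dep: "dep n F" and inv: "\<And>x. \<beta> (\<beta> x) = x"
  shows "(\<Sum>x\<in>pts (Suc n). g (F x + \<beta> (x n)) * (\<Prod>i<Suc n. x i)) = (\<Sum>s\<in>UNIV. g s * Dc n F \<beta> s)"
proof -
  have "(\<Sum>x\<in>pts (Suc n). g (F x + \<beta> (x n)) * (\<Prod>i<Suc n. x i))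
      = (\<Sum>y\<in>pts n. \<Sum>t\<in>UNIV. g (F (y(n:=t)) + \<beta> ((y(n:=t)) n)) * (\<Prod>i<Suc n. (y(n:=t)) i))"
    by (rule sum_pts_Suc)
  also have "\<dots> = (\<Sum>y\<in>pts n. (\<Prod>i<n. y i) * (\<Sum>t\<in>UNIV. g (F y + \<beta> t) * t))"
  proof (rule sum.cong[OF refl])
    fix y :: "nat \<Rightarrow> 'a"
    have f: "F (y(n:=t)) = F y" for t using dep by (auto simp: dep_def)
    have p: "(\<Prod>i<Suc n. (y(n:=t)) i) = (\<Prod>i<n. y i) * t" for t
    proof -
      have "(\<Prod>i<n. (y(n:=t)) i) = (\<Prod>i<n. y i)" by (rule prod.cong) auto
      then show ?thesis by (simp add: lessThan_Suc mult.commute)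
    qed
    show "(\<Sum>t\<in>UNIV. g (F (y(n:=t)) + \<beta> ((y(n:=t)) n)) * (\<Prod>i<Suc n. (y(n:=t)) i))
        = (\<Prod>i<n. y i) * (\<Sum>t\<in>UNIV. g (F y + \<beta> t) * t)"
      by (simp only: f p fun_upd_same sum_distrib_left mult.left_commute)
  qed
  also have "\<dots> = (\<Sum>y\<in>pts n. (\<Prod>i<n. y i) * (\<Sum>s\<in>UNIV. g s * \<beta> (s - F y)))"
    by (simp only: sum_subst_beta[OF inv])
  also have "\<dots> = (\<Sum>y\<in>pts n. \<Sum>s\<in>UNIV. g s * ((\<Prod>i<n. y i) * \<beta> (s - F y)))"
    by (simp only: sum_distrib_left mult.left_commute)
  also have "\<dots> = (\<Sum>s\<in>UNIV. \<Sum>y\<in>pts n. g s * ((\<Prod>i<n. y i) * \<beta> (s - F y)))"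
    by (rule sum.swap)
  also have "\<dots> = (\<Sum>s\<in>UNIV. g s * Dc n F \<beta> s)"
    by (simp only: Dc_def sum_distrib_left)
  finally show ?thesis .
qed

lemma bij_plus_const: "bij (\<lambda>u::'a::ab_group_add. u + c)"
  by (rule bijI2[where g="\<lambda>u. u - c"]) simp_all

lemma bij_const_plus: "bij (\<lambda>u::'a::ab_group_add. c + u)"
  by (rule bijI2[where g="\<lambda>u. u - c"]) simp_all

lemma step_latin_dep:
  fixes F :: "(nat \<Rightarrow> 'a) \<Rightarrow> 'a::{finite,field}"
  assumes lat: "latin n F" and dep: "dep n F" and inv: "\<And>x. \<beta> (\<beta> x) = x" and \<sigma>: "bij \<sigma>"
  shows "latin (Suc n) (\<lambda>x. \<sigma> (F x + \<beta> (x n)))" "dep (Suc n) (\<lambda>x. \<sigma> (F x + \<beta> (x n)))"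
proof -
  have b\<beta>: "bij \<beta>" by (rule bijI2[where g=\<beta>]) (simp_all add: inv)
  show "latin (Suc n) (\<lambda>x. \<sigma> (F x + \<beta> (x n)))"
    unfolding latin_def
  proof (intro allI impI)
    fix i a assume i: "i < Suc n"
    show "bij (\<lambda>t. \<sigma> (F (a(i:=t)) + \<beta> ((a(i:=t)) n)))"
    proof (cases "i = n")
      case True
      have f: "F (a(n:=t)) = F a" for t using dep by (auto simp: dep_def)
      have "(\<lambda>t. \<sigma> (F (a(i:=t)) + \<beta> ((a(i:=t)) n))) = \<sigma> \<circ> (\<lambda>u. F a + u) \<circ> \<beta>"
        using True by (simp add: f fun_eq_iff)
      then show ?thesis using \<sigma> b\<beta> bij_const_plus by (metis bij_comp)
    next
      case False
      then have "i < n" using i by simp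
      then have bF: "bij (\<lambda>t. F (a(i:=t)))" using lat by (simp add: latin_def)
      have "(\<lambda>t. \<sigma> (F (a(i:=t)) + \<beta> ((a(i:=t)) n))) = \<sigma> \<circ> (\<lambda>u. u + \<beta> (a n)) \<circ> (\<lambda>t. F (a(i:=t)))"
        using False by (simp add: fun_eq_iff)
      then show ?thesis using \<sigma> bF bij_plus_const by (metis bij_comp)
    qed
  qed
  show "dep (Suc n) (\<lambda>x. \<sigma> (F x + \<beta> (x n)))"
    unfolding dep_def
  proof (intro allI impI)
    fix x y :: "nat \<Rightarrow> 'a" assume h: "\<forall>i<Suc n. x i = y i"
    then have "F x = F y" using dep by (simp add: dep_def)
    moreover have "x n = y n" using h by simp
    ultimately show "\<sigma> (F x + \<beta> (x n)) = \<sigma> (F y + \<beta> (y n))" by simp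
  qed
qed

lemma step_T:
  fixes F :: "(nat \<Rightarrow> 'a) \<Rightarrow> 'a::{finite,field}"
  assumes dep: "dep n F" and inv: "\<And>x. \<beta> (\<beta> x) = x"
  shows "(\<Sum>x\<in>pts (Suc n). \<sigma> (F x + \<beta> (x n)) * (\<Prod>i<Suc n. x i)) = (\<Sum>s\<in>UNIV. \<sigma> s * Dc n F \<beta> s)"
  by (rule key_sum[OF dep inv])

lemma step_wt:
  fixes F :: "(nat \<Rightarrow> 'a) \<Rightarrow> 'a::{finite,field}"
  assumes dep: "dep n F" and inv: "\<And>x. \<beta> (\<beta> x) = x" and \<sigma>: "bij \<sigma>"
  shows "wt (Suc n) (\<lambda>x. \<sigma> (F x + \<beta> (x n))) z = Dc n F \<beta> (inv \<sigma> z)"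
proof -
  have "wt (Suc n) (\<lambda>x. \<sigma> (F x + \<beta> (x n))) z
      = (\<Sum>x\<in>pts (Suc n). (\<lambda>v. if \<sigma> v = z then 1 else 0) (F x + \<beta> (x n)) * (\<Prod>i<Suc n. x i))"
    unfolding wt_def by (intro sum.cong refl) simp
  also have "\<dots> = (\<Sum>s\<in>UNIV. (if \<sigma> s = z then 1 else 0) * Dc n F \<beta> s)"
    by (rule key_sum[OF dep inv])
  also have "\<dots> = (\<Sum>s\<in>UNIV. if s = inv \<sigma> z then Dc n F \<beta> s else 0)"
    by (intro sum.cong refl) (simp add: bij_inv_eq_iff[OF \<sigma>])
  also have "\<dots> = Dc n F \<beta> (inv \<sigma> z)" by simp
  finally show ?thesis .
qed



lemma claim:
  assumes q: "CARD('a::{finite,field}) > 3" and two: "(2::'a) \<noteq> 0"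
  shows "\<exists>F :: (nat \<Rightarrow> 'a) \<Rightarrow> 'a. latin n F \<and> dep n F \<and> NA (wt n F)"
proof (induction n)
  case 0
  let ?F = "\<lambda>x::nat \<Rightarrow> 'a. (0::'a)"
  have p0: "pts 0 = {(\<lambda>_. 0) :: nat \<Rightarrow> 'a}" by (auto simp: pts_def)
  have w: "wt 0 ?F z = (if z = 0 then 1 else 0)" for z by (simp add: wt_def p0)
  have "wt 0 ?F (1 + -1) - wt 0 ?F (-1) \<noteq> wt 0 ?F 1 - wt 0 ?F 0"
    using two by (simp add: w)
  then have "NA (wt 0 ?F)" unfolding NA_def by blast
  moreover have "latin 0 ?F" by (simp add: latin_def)
  moreover have "dep 0 ?F" by (simp add: dep_def)
  ultimately show ?case by blast
next
  case (Suc n)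
  then obtain F :: "(nat \<Rightarrow> 'a) \<Rightarrow> 'a" where lat: "latin n F" and dep: "dep n F" and na: "NA (wt n F)"
    by blast
  obtain \<beta> :: "'a \<Rightarrow> 'a" where inv: "\<forall>x. \<beta> (\<beta> x) = x"
    and ne: "\<exists>s1 s2. (\<Sum>u\<in>UNIV. wt n F u * \<beta> (s1 - u)) \<noteq> (\<Sum>u\<in>UNIV. wt n F u * \<beta> (s2 - u))"
    using choose_beta[OF na] by blast
  obtain s1 s2 where "Dc n F \<beta> s1 \<noteq> Dc n F \<beta> s2" using ne by (auto simp: Dc_conv)
  then obtain \<pi> where \<pi>: "bij \<pi>" and na': "NA (Dc n F \<beta> \<circ> \<pi>)"
    using choose_pi[OF q two] by blast
  define \<sigma> where "\<sigma> = inv \<pi>"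
  have \<sigma>: "bij \<sigma>" unfolding \<sigma>_def by (rule bij_imp_bij_inv[OF \<pi>])
  have inv': "\<And>x. \<beta> (\<beta> x) = x" using inv by blast
  let ?F = "\<lambda>x. \<sigma> (F x + \<beta> (x n))"
  have "wt (Suc n) ?F = Dc n F \<beta> \<circ> \<pi>"
    using step_wt[OF dep inv' \<sigma>] by (simp add: fun_eq_iff \<sigma>_def inv_inv_eq[OF \<pi>])
  then have "NA (wt (Suc n) ?F)" using na' by simp
  then show ?case using step_latin_dep[OF lat dep inv' \<sigma>] by blast
qed

lemma final:
  assumes q: "CARD('a::{finite,field}) > 3" and two: "(2::'a) \<noteq> 0"
  shows "\<exists>F :: (nat \<Rightarrow> 'a) \<Rightarrow> 'a. latin (Suc n) F \<and> dep (Suc n) F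
           \<and> (\<Sum>a\<in>pts (Suc n). F a * (\<Prod>i<Suc n. a i)) \<noteq> 0"
proof -
  obtain F :: "(nat \<Rightarrow> 'a) \<Rightarrow> 'a" where lat: "latin n F" and dep: "dep n F" and na: "NA (wt n F)"
    using claim[OF q two] by blast
  obtain \<beta> :: "'a \<Rightarrow> 'a" where inv: "\<forall>x. \<beta> (\<beta> x) = x"
    and ne: "\<exists>s1 s2. (\<Sum>u\<in>UNIV. wt n F u * \<beta> (s1 - u)) \<noteq> (\<Sum>u\<in>UNIV. wt n F u * \<beta> (s2 - u))"
    using choose_beta[OF na] by blast
  obtain s1 s2 where "Dc n F \<beta> s1 \<noteq> Dc n F \<beta> s2" using ne by (auto simp: Dc_conv)
  then obtain \<sigma> where \<sigma>: "bij \<sigma>" and T: "(\<Sum>s\<in>UNIV. \<sigma> s * Dc n F \<beta> s) \<noteq> 0"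
    using choose_sigma by blast
  have inv': "\<And>x. \<beta> (\<beta> x) = x" using inv by blast
  let ?F = "\<lambda>x. \<sigma> (F x + \<beta> (x n))"
  have "(\<Sum>a\<in>pts (Suc n). ?F a * (\<Prod>i<Suc n. a i)) \<noteq> 0"
    using step_T[OF dep inv', of \<sigma>] T by simp
  then show ?thesis using step_latin_dep[OF lat dep inv' \<sigma>] by blast
qed

theorem mainTheorem13:
  fixes p r n :: nat
  assumes "prime p" and "p \<ge> 3"
    and "CARD('a::{finite,field}) = p ^ r" and "CARD('a) > 3"
    and "n \<ge> 1"
  shows "\<exists>c :: (nat \<Rightarrow> nat) \<Rightarrow> 'a. reduced_poly n CARD('a) c \<and> is_lpp n c
           \<and> total_degree n c = n * (CARD('a) - 2)"
proof -
  have oddp: "odd p" using prime_odd_nat[OF assms(1)] assms(2) by simp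
  have odd: "odd CARD('a)" using assms(3) oddp by simp
  have two: "(2::'a) \<noteq> 0" by (rule two_ne_zero[OF odd])
  obtain m where n: "n = Suc m" using assms(5) by (cases n) auto
  obtain F :: "(nat \<Rightarrow> 'a) \<Rightarrow> 'a" where lat: "latin n F" and dep: "dep n F"
    and T: "(\<Sum>a\<in>pts n. F a * (\<Prod>i<n. a i)) \<noteq> 0"
    using final[OF assms(4) two, of m] n by blast
  have "reduced_poly n CARD('a) (coef n F)"
    unfolding reduced_poly_def coef_def by auto
  moreover have "is_lpp n (coef n F)"
    unfolding is_lpp_def using lat by (simp add: mpeval_coef[OF dep] latin_def)
  moreover have "total_degree n (coef n F) = n * (CARD('a) - 2)"
    by (rule total_degree_coef[OF lat odd assms(4) T])
  ultimately show ?thesis by blast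
qed


end
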